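(* Let $\varepsilon>0$ and $a\geq 0$ with $a+\varepsilon\leq 1$. If $\omega(1,1,a)=r$, then $\omega(1,1-\varepsilon,a+\varepsilon)\leq r$.
   Context: $\omega(x_1,x_2,x_3)$ denotes the exponent of rectangular matrix multiplication: multiplying an $n^{x_1}\times n^{x_2}$ matrix by an $n^{x_2}\times n^{x_3}$ matrix takes $n^{\omega(x_1,x_2,x_3)+o(1)}$ time (equivalently, arithmetic operations / tensor rank exponent). It is invariant under permuting its three arguments. *)

theory Defs
  imports Complex_Main
begin

definition bilinear_mm_alg :: "nat \<Rightarrow> nat \<Rightarrow> nat \<Rightarrow> nat \<Rightarrow> bool" where
  "bilinear_mm_alg p q s r \<longleftrightarrow>
     (\<exists>(u :: nat \<Rightarrow> nat \<Rightarrow> nat \<Rightarrow> complex) (v :: nat \<Rightarrow> nat \<Rightarrow> nat \<Rightarrow> complex)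
        (w :: nat \<Rightarrow> nat \<Rightarrow> nat \<Rightarrow> complex).
       \<forall>(A :: nat \<Rightarrow> nat \<Rightarrow> complex) (B :: nat \<Rightarrow> nat \<Rightarrow> complex) i l.
         i < p \<longrightarrow> l < s \<longrightarrow>
         (\<Sum>k<q. A i k * B k l) =
         (\<Sum>t<r. (\<Sum>j<p. \<Sum>k<q. u t j k * A j k) *
                  (\<Sum>j<q. \<Sum>k<s. v t j k * B j k) * w t i l))"

definition mm_rank :: "nat \<Rightarrow> nat \<Rightarrow> nat \<Rightarrow> nat" where
  "mm_rank p q s = (LEAST r. bilinear_mm_alg p q s r)"

definition omega :: "real \<Rightarrow> real \<Rightarrow> real \<Rightarrow> real" where
  "omega x1 x2 x3 = Inf {\<tau>. \<exists>C. \<forall>\<^sub>F n in sequentially.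
      real (mm_rank (nat \<lceil>real n powr x1\<rceil>) (nat \<lceil>real n powr x2\<rceil>) (nat \<lceil>real n powr x3\<rceil>))
        \<le> C * real n powr \<tau>}"

end

theory Submission imports Defs begin

definition tens :: "nat \<Rightarrow> nat \<Rightarrow> nat \<Rightarrow> nat \<Rightarrow> bool" where
"tens p q s r \<longleftrightarrow> (\<exists>u v w :: nat\<Rightarrow>nat\<Rightarrow>nat\<Rightarrow>complex. \<forall>i j k k' l l'.
   i<p \<longrightarrow> j<p \<longrightarrow> k<q \<longrightarrow> k'<q \<longrightarrow> l<s \<longrightarrow> l'<s \<longrightarrow>
   (\<Sum>t<r. u t j k * v t k' l' * w t i l) = (if j = i \<and> k = k' \<and> l' = l then 1 else 0))"

lemma sum_div_mod:
  fixes a b :: nat shows "(\<Sum>t<a*b. (f (t div b) (t mod b) :: 'c::comm_monoid_add)) = (\<Sum>x<a. \<Sum>y<b. f x y)"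
proof (induction a)
  case 0 then show ?case by simp
next
  case (Suc a)
  have "{..<Suc a * b} = {..<a*b} \<union> {a*b..<a*b+b}" by auto
  then have "(\<Sum>t<Suc a*b. f (t div b) (t mod b)) = (\<Sum>t<a*b. f (t div b) (t mod b)) + (\<Sum>t\<in>{a*b..<a*b+b}. f (t div b) (t mod b))"
    by (simp add: sum.union_disjoint ivl_disj_int)
  also have "(\<Sum>t\<in>{a*b..<a*b+b}. f (t div b) (t mod b)) = (\<Sum>y<b. f (((a*b)+y) div b) ((a*b+y) mod b))"
  proof -
    have "{a*b..<a*b+b} = {0+a*b..<b+a*b}" by (simp add: add.commute)
    then show ?thesis by (simp only: sum.shift_bounds_nat_ivl atLeast0LessThan add.commute)
  qed
  also have "\<dots> = (\<Sum>y<b. f a y)"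
    by (rule sum.cong) auto
  finally show ?case using Suc by simp
qed

lemma if01: "(x::'a::semiring_1) * (if P then y else 0) = (if P then x * y else 0)" by simp
lemma ifconj: "(if P \<and> Q then x else 0) = (if P then (if Q then x else 0) else (0::'a::zero))" by simp
lemma sum_if_const: "(\<Sum>x\<in>A. if P then f x else 0) = (if P then (\<Sum>x\<in>A. f x) else (0::'a::comm_monoid_add))" by simp
lemmas dsimps = sum_if_const sum.delta sum.delta'

lemma alg_imp_tens: assumes "bilinear_mm_alg p q s r" shows "tens p q s r"
proof -
  obtain u v w :: "nat\<Rightarrow>nat\<Rightarrow>nat\<Rightarrow>complex" where H0: "\<forall>A B i l. i < p \<longrightarrow> l < s \<longrightarrow>
         (\<Sum>k<q. A i k * B k l) =
         (\<Sum>t<r. (\<Sum>j<p. \<Sum>k<q. u t j k * A j k) *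
                  (\<Sum>j<q. \<Sum>k<s. v t j k * B j k) * w t i l)"
    using assms unfolding bilinear_mm_alg_def by blast
  note H = H0[rule_format]
  show ?thesis unfolding tens_def
  proof (intro exI allI impI)
    fix i j k k' l l' assume a: "i<p" "j<p" "k<q" "k'<q" "l<s" "l'<s"
    define A where "A = (\<lambda>x y. if x = j then if y = k then 1 else 0 else (0::complex))"
    define B where "B = (\<lambda>x y. if x = k' then if y = l' then 1 else 0 else (0::complex))"
    have 1: "(\<Sum>y<q. A i y * B y l) = (if j = i \<and> k = k' \<and> l' = l then 1 else 0)"
    proof -
      have "(\<lambda>y. A i y * B y l) = (\<lambda>y. if y = k then (if j = i \<and> k = k' \<and> l' = l then 1 else 0) else 0)"
        by (auto simp: A_def B_def fun_eq_iff)
      then show ?thesis unfolding \<open>(\<lambda>y. A i y * B y l) = _\<close> using a by simp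
    qed
    have 2: "(\<Sum>x<p. \<Sum>y<q. u t x y * A x y) = u t j k" for t
    proof -
      have "(\<Sum>x<p. \<Sum>y<q. u t x y * A x y) = (\<Sum>x<p. \<Sum>y<q. if x = j then if y = k then u t x y else 0 else 0)"
        unfolding A_def by (simp only: if01 mult_1_right mult_0_right)
      also have "\<dots> = u t j k" using a by (simp add: dsimps)
      finally show ?thesis .
    qed
    have 3: "(\<Sum>x<q. \<Sum>y<s. v t x y * B x y) = v t k' l'" for t
    proof -
      have "(\<Sum>x<q. \<Sum>y<s. v t x y * B x y) = (\<Sum>x<q. \<Sum>y<s. if x = k' then if y = l' then v t x y else 0 else 0)"
        unfolding B_def by (simp only: if01 mult_1_right mult_0_right)
      also have "\<dots> = v t k' l'" using a by (simp add: dsimps)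
      finally show ?thesis .
    qed
    show "(\<Sum>t<r. u t j k * v t k' l' * w t i l) = (if j = i \<and> k = k' \<and> l' = l then 1 else 0)"
      using H[of i l A B] a 1 2 3 by simp
  qed
qed

lemma tens_imp_alg: assumes "tens p q s r" shows "bilinear_mm_alg p q s r"
proof -
  obtain u v w :: "nat\<Rightarrow>nat\<Rightarrow>nat\<Rightarrow>complex" where H0: "\<forall>i j k k' l l'.
   i<p \<longrightarrow> j<p \<longrightarrow> k<q \<longrightarrow> k'<q \<longrightarrow> l<s \<longrightarrow> l'<s \<longrightarrow>
   (\<Sum>t<r. u t j k * v t k' l' * w t i l) = (if j = i \<and> k = k' \<and> l' = l then 1 else 0)"
    using assms unfolding tens_def by blast
  note H = H0[rule_format]
  show ?thesis unfolding bilinear_mm_alg_def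
  proof (intro exI allI impI)
    fix A B :: "nat \<Rightarrow> nat \<Rightarrow> complex" and i l assume a: "i < p" "l < s"
    have "(\<Sum>t<r. (\<Sum>j<p. \<Sum>k<q. u t j k * A j k) * (\<Sum>j<q. \<Sum>k<s. v t j k * B j k) * w t i l)
      = (\<Sum>t<r. \<Sum>j<p. \<Sum>k<q. \<Sum>k'<q. \<Sum>l'<s. A j k * B k' l' * (u t j k * v t k' l' * w t i l))"
    proof (rule sum.cong[OF refl])
      fix t
      have "(\<Sum>j<p. \<Sum>k<q. u t j k * A j k) * (\<Sum>j<q. \<Sum>k<s. v t j k * B j k) * w t i l
        = (\<Sum>j<p. \<Sum>k<q. u t j k * A j k * (\<Sum>j<q. \<Sum>k<s. v t j k * B j k) * w t i l)"
        by (simp only: sum_distrib_right)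
      also have "\<dots> = (\<Sum>j<p. \<Sum>k<q. \<Sum>k'<q. \<Sum>l'<s. A j k * B k' l' * (u t j k * v t k' l' * w t i l))"
        by (intro sum.cong refl) (simp add: sum_distrib_left sum_distrib_right mult_ac)
      finally show "(\<Sum>j<p. \<Sum>k<q. u t j k * A j k) * (\<Sum>j<q. \<Sum>k<s. v t j k * B j k) * w t i l
        = (\<Sum>j<p. \<Sum>k<q. \<Sum>k'<q. \<Sum>l'<s. A j k * B k' l' * (u t j k * v t k' l' * w t i l))" .
    qed
    also have "\<dots> = (\<Sum>j<p. \<Sum>k<q. \<Sum>k'<q. \<Sum>l'<s. \<Sum>t<r. A j k * B k' l' * (u t j k * v t k' l' * w t i l))"
      apply (rule trans[OF sum.swap]) apply (rule sum.cong[OF refl]) apply (rule trans[OF sum.swap]) apply (rule sum.cong[OF refl])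
      apply (rule trans[OF sum.swap]) apply (rule sum.cong[OF refl]) apply (rule trans[OF sum.swap]) apply (rule refl) done
    also have "\<dots> = (\<Sum>j<p. \<Sum>k<q. \<Sum>k'<q. \<Sum>l'<s. A j k * B k' l' * (if j = i \<and> k = k' \<and> l' = l then 1 else 0))"
      using a by (simp add: sum_distrib_left[symmetric] H)
    also have "\<dots> = (\<Sum>k<q. A i k * B k l)"
      using a by (simp only: if01 ifconj mult_1_right) (simp add: dsimps)
    finally show "(\<Sum>k<q. A i k * B k l) = (\<Sum>t<r. (\<Sum>j<p. \<Sum>k<q. u t j k * A j k) * (\<Sum>j<q. \<Sum>k<s. v t j k * B j k) * w t i l)" by simp
  qed
qed


lemma tens_cyc: assumes "tens p q s r" shows "tens q s p r"
proof -
  obtain u v w :: "nat\<Rightarrow>nat\<Rightarrow>nat\<Rightarrow>complex" where H0: "\<forall>i j k k' l l'.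
   i<p \<longrightarrow> j<p \<longrightarrow> k<q \<longrightarrow> k'<q \<longrightarrow> l<s \<longrightarrow> l'<s \<longrightarrow>
   (\<Sum>t<r. u t j k * v t k' l' * w t i l) = (if j = i \<and> k = k' \<and> l' = l then 1 else 0)"
    using assms unfolding tens_def by blast
  note H = H0[rule_format]
  show ?thesis unfolding tens_def
  proof (rule exI[of _ v], rule exI[of _ "\<lambda>t k' l'. w t l' k'"], rule exI[of _ "\<lambda>t i l. u t l i"], intro allI impI)
    fix i j k k' l l' assume a: "i<q" "j<q" "k<s" "k'<s" "l<p" "l'<p"
    have "(\<Sum>t<r. v t j k * w t l' k' * u t l i) = (\<Sum>t<r. u t l i * v t j k * w t l' k')"
      by (simp add: mult_ac)
    also have "\<dots> = (if j = i \<and> k = k' \<and> l' = l then 1 else 0)"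
      using H[of l' l i j k' k] a by auto
    finally show "(\<Sum>t<r. v t j k * w t l' k' * u t l i) = (if j = i \<and> k = k' \<and> l' = l then 1 else 0)" .
  qed
qed

lemma tens_mono: assumes "tens p q s r" "p' \<le> p" "q' \<le> q" "s' \<le> s" shows "tens p' q' s' r"
proof -
  obtain u v w :: "nat\<Rightarrow>nat\<Rightarrow>nat\<Rightarrow>complex" where H0: "\<forall>i j k k' l l'.
   i<p \<longrightarrow> j<p \<longrightarrow> k<q \<longrightarrow> k'<q \<longrightarrow> l<s \<longrightarrow> l'<s \<longrightarrow>
   (\<Sum>t<r. u t j k * v t k' l' * w t i l) = (if j = i \<and> k = k' \<and> l' = l then 1 else 0)"
    using assms unfolding tens_def by blast
  show ?thesis unfolding tens_def
    by (rule exI[of _ u], rule exI[of _ v], rule exI[of _ w], intro allI impI H0[rule_format]) (use assms in auto)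
qed

lemma tens_base: "tens p 1 1 p"
  unfolding tens_def
proof (rule exI[of _ "\<lambda>t j k. if t = j then 1 else 0"], rule exI[of _ "\<lambda>t j k. 1"], rule exI[of _ "\<lambda>t i l. if t = i then 1 else 0"], intro allI impI)
  fix i j k k' l l' :: nat assume a: "i<p" "j<p" "k<1" "k'<1" "l<1" "l'<1"
  show "(\<Sum>t<p. (if t = j then 1 else 0) * 1 * (if t = i then 1 else 0)) =
       (if j = i \<and> k = k' \<and> l' = l then (1::complex) else 0)"
    using a by (simp add: if01 dsimps)
qed

lemma divmod_eq_iff: "(a div n = b div n \<and> a mod n = b mod n) \<longleftrightarrow> a = (b::nat)"
  by (metis div_mult_mod_eq)

lemma tens_mult: assumes "tens p1 q1 s1 r1" "tens p2 q2 s2 r2"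
  shows "tens (p1*p2) (q1*q2) (s1*s2) (r1*r2)"
proof -
  obtain u1 v1 w1 :: "nat\<Rightarrow>nat\<Rightarrow>nat\<Rightarrow>complex" where H1: "\<forall>i j k k' l l'.
   i<p1 \<longrightarrow> j<p1 \<longrightarrow> k<q1 \<longrightarrow> k'<q1 \<longrightarrow> l<s1 \<longrightarrow> l'<s1 \<longrightarrow>
   (\<Sum>t<r1. u1 t j k * v1 t k' l' * w1 t i l) = (if j = i \<and> k = k' \<and> l' = l then 1 else 0)"
    using assms(1) unfolding tens_def by blast
  obtain u2 v2 w2 :: "nat\<Rightarrow>nat\<Rightarrow>nat\<Rightarrow>complex" where H2: "\<forall>i j k k' l l'.
   i<p2 \<longrightarrow> j<p2 \<longrightarrow> k<q2 \<longrightarrow> k'<q2 \<longrightarrow> l<s2 \<longrightarrow> l'<s2 \<longrightarrow>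
   (\<Sum>t<r2. u2 t j k * v2 t k' l' * w2 t i l) = (if j = i \<and> k = k' \<and> l' = l then 1 else 0)"
    using assms(2) unfolding tens_def by blast
  show ?thesis unfolding tens_def
  proof (rule exI[of _ "\<lambda>t j k. u1 (t div r2) (j div p2) (k div q2) * u2 (t mod r2) (j mod p2) (k mod q2)"],
      rule exI[of _ "\<lambda>t j k. v1 (t div r2) (j div q2) (k div s2) * v2 (t mod r2) (j mod q2) (k mod s2)"],
      rule exI[of _ "\<lambda>t j k. w1 (t div r2) (j div p2) (k div s2) * w2 (t mod r2) (j mod p2) (k mod s2)"], intro allI impI)
    fix i j k k' l l' assume a: "i<p1*p2" "j<p1*p2" "k<q1*q2" "k'<q1*q2" "l<s1*s2" "l'<s1*s2"
    have pos: "p2 > 0" "q2 > 0" "s2 > 0" using a by (auto intro!: Nat.gr0I)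
    have b1: "i div p2 < p1" "j div p2 < p1" "k div q2 < q1" "k' div q2 < q1" "l div s2 < s1" "l' div s2 < s1"
      using a by (auto simp: less_mult_imp_div_less mult.commute)
    have b2: "i mod p2 < p2" "j mod p2 < p2" "k mod q2 < q2" "k' mod q2 < q2" "l mod s2 < s2" "l' mod s2 < s2"
      using pos by auto
    have "(\<Sum>t<r1*r2. (u1 (t div r2) (j div p2) (k div q2) * u2 (t mod r2) (j mod p2) (k mod q2)) *
           (v1 (t div r2) (k' div q2) (l' div s2) * v2 (t mod r2) (k' mod q2) (l' mod s2)) *
           (w1 (t div r2) (i div p2) (l div s2) * w2 (t mod r2) (i mod p2) (l mod s2)))
       = (\<Sum>x<r1. \<Sum>y<r2. (u1 x (j div p2) (k div q2) * v1 x (k' div q2) (l' div s2) * w1 x (i div p2) (l div s2)) *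
              (u2 y (j mod p2) (k mod q2) * v2 y (k' mod q2) (l' mod s2) * w2 y (i mod p2) (l mod s2)))"
      by (subst sum_div_mod[where f = "\<lambda>x y. (u1 x (j div p2) (k div q2) * v1 x (k' div q2) (l' div s2) * w1 x (i div p2) (l div s2)) *
              (u2 y (j mod p2) (k mod q2) * v2 y (k' mod q2) (l' mod s2) * w2 y (i mod p2) (l mod s2))", symmetric])
         (simp add: mult_ac)
    also have "\<dots> = (\<Sum>x<r1. u1 x (j div p2) (k div q2) * v1 x (k' div q2) (l' div s2) * w1 x (i div p2) (l div s2)) *
              (\<Sum>y<r2. u2 y (j mod p2) (k mod q2) * v2 y (k' mod q2) (l' mod s2) * w2 y (i mod p2) (l mod s2))"
      by (simp add: sum_product)
    also have "\<dots> = (if j div p2 = i div p2 \<and> k div q2 = k' div q2 \<and> l' div s2 = l div s2 then 1 else 0) *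
                    (if j mod p2 = i mod p2 \<and> k mod q2 = k' mod q2 \<and> l' mod s2 = l mod s2 then 1 else 0)"
      using H1[rule_format, OF b1(1,2,3,4,5,6)] H2[rule_format, OF b2(1,2,3,4,5,6)] by simp
    also have "\<dots> = (if j = i \<and> k = k' \<and> l' = l then 1 else 0)"
      using divmod_eq_iff[of j p2 i] divmod_eq_iff[of k q2 k'] divmod_eq_iff[of l' s2 l] by auto
    finally show "(\<Sum>t<r1*r2. (u1 (t div r2) (j div p2) (k div q2) * u2 (t mod r2) (j mod p2) (k mod q2)) *
           (v1 (t div r2) (k' div q2) (l' div s2) * v2 (t mod r2) (k' mod q2) (l' mod s2)) *
           (w1 (t div r2) (i div p2) (l div s2) * w2 (t mod r2) (i mod p2) (l mod s2))) =
       (if j = i \<and> k = k' \<and> l' = l then 1 else 0)" .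
  qed
qed

lemma tens_naive: "tens p q s (p*q*s)"
proof -
  have "tens (p*1*1) (1*q*1) (1*1*s) (p*q*s)"
    by (rule tens_mult[OF tens_mult[OF tens_base[of p] tens_cyc[OF tens_cyc[OF tens_base[of q]]]] tens_cyc[OF tens_base[of s]]])
  then show ?thesis by simp
qed

lemma alg_iff: "bilinear_mm_alg p q s r \<longleftrightarrow> tens p q s r"
  using alg_imp_tens tens_imp_alg by blast

lemma rank_tens: "tens p q s (mm_rank p q s)"
  unfolding mm_rank_def alg_iff[symmetric]
  by (rule LeastI_ex) (use tens_naive alg_iff in blast)

lemma rank_le: "tens p q s r \<Longrightarrow> mm_rank p q s \<le> r"
  unfolding mm_rank_def alg_iff[symmetric] by (rule Least_le)

lemma rank_naive: "mm_rank p q s \<le> p*q*s"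
  by (rule rank_le[OF tens_naive])

lemma rank_mono: "p' \<le> p \<Longrightarrow> q' \<le> q \<Longrightarrow> s' \<le> s \<Longrightarrow> mm_rank p' q' s' \<le> mm_rank p q s"
  by (rule rank_le, rule tens_mono[OF rank_tens])

lemma rank_mult: "mm_rank (p1*p2) (q1*q2) (s1*s2) \<le> mm_rank p1 q1 s1 * mm_rank p2 q2 s2"
  by (rule rank_le, rule tens_mult[OF rank_tens rank_tens])

lemma rank_cyc: "mm_rank q s p \<le> mm_rank p q s"
  by (rule rank_le, rule tens_cyc[OF rank_tens])

lemma rank_pos: assumes "p > 0" "q > 0" "s > 0" shows "mm_rank p q s \<ge> 1"
proof (rule ccontr)
  assume "\<not> mm_rank p q s \<ge> 1"
  then have "mm_rank p q s = 0" by simp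
  then have "tens p q s 0" using rank_tens[of p q s] by simp
  then have "bilinear_mm_alg p q s 0" by (simp add: alg_iff)
  then obtain u v w :: "nat\<Rightarrow>nat\<Rightarrow>nat\<Rightarrow>complex" where H: "\<forall>(A :: nat \<Rightarrow> nat \<Rightarrow> complex) (B :: nat \<Rightarrow> nat \<Rightarrow> complex) i l.
         i < p \<longrightarrow> l < s \<longrightarrow>
         (\<Sum>k<q. A i k * B k l) =
         (\<Sum>t<0. (\<Sum>j<p. \<Sum>k<q. u t j k * A j k) *
                  (\<Sum>j<q. \<Sum>k<s. v t j k * B j k) * w t i l)"
    unfolding bilinear_mm_alg_def by blast
  have "(\<Sum>k<q. (1::complex) * 1) = 0" using H[rule_format, of 0 0 "\<lambda>_ _. 1" "\<lambda>_ _. 1"] assms by simp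
  then show False using assms by simp
qed


definition Rk :: "real \<Rightarrow> real \<Rightarrow> real \<Rightarrow> nat \<Rightarrow> real" where
  "Rk x1 x2 x3 n = real (mm_rank (nat \<lceil>real n powr x1\<rceil>) (nat \<lceil>real n powr x2\<rceil>) (nat \<lceil>real n powr x3\<rceil>))"

definition Sset :: "real \<Rightarrow> real \<Rightarrow> real \<Rightarrow> real set" where
  "Sset x1 x2 x3 = {\<tau>. \<exists>C. \<forall>\<^sub>F n in sequentially. Rk x1 x2 x3 n \<le> C * real n powr \<tau>}"

lemma omega_Sset: "omega x1 x2 x3 = Inf (Sset x1 x2 x3)"
  unfolding omega_def Sset_def Rk_def by simp

lemma nat_ceil_powr1: "nat \<lceil>real n powr 1\<rceil> = n"
  by (cases "n = 0") auto

lemma dim_pos: "n > 0 \<Longrightarrow> nat \<lceil>real n powr x\<rceil> > 0"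
  by simp

lemma Sset_nonneg: assumes "\<tau> \<in> Sset x1 x2 x3" shows "\<tau> \<ge> 0"
proof (rule ccontr)
  assume neg: "\<not> \<tau> \<ge> 0"
  obtain C where ev: "\<forall>\<^sub>F n in sequentially. Rk x1 x2 x3 n \<le> C * real n powr \<tau>"
    using assms unfolding Sset_def by blast
  have "((\<lambda>n. real n powr \<tau>) \<longlongrightarrow> 0) sequentially"
    using neg by (intro tendsto_neg_powr filterlim_real_sequentially) auto
  then have "((\<lambda>n. C * real n powr \<tau>) \<longlongrightarrow> 0) sequentially"
    by (rule tendsto_mult_right_zero)
  then have ev2: "\<forall>\<^sub>F n in sequentially. C * real n powr \<tau> < 1"
    by (rule order_tendstoD) simp
  have ev3: "\<forall>\<^sub>F n in sequentially. Rk x1 x2 x3 n \<ge> 1"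
    using eventually_gt_at_top[of 0]
  proof eventually_elim
    case (elim n)
    then show ?case unfolding Rk_def using rank_pos[OF dim_pos dim_pos dim_pos] by simp
  qed
  have "\<forall>\<^sub>F n in sequentially. False"
    using ev ev2 ev3 by eventually_elim simp
  then show False by simp
qed

lemma bdd_Sset: "bdd_below (Sset x1 x2 x3)"
  using Sset_nonneg by (intro bdd_belowI[of _ 0]) auto

lemma Sset_ne: assumes "a \<le> 1" shows "(3::real) \<in> Sset 1 1 a"
  unfolding Sset_def
proof (intro CollectI exI[of _ 2], rule eventually_sequentiallyI[of 1])
  fix n :: nat assume n: "n \<ge> 1"
  have r: "real n \<ge> 1" using n by simp
  have "real n powr a \<le> real n powr 1" using r assms by (intro powr_mono) auto
  then have pa: "real n powr a \<le> real n" using r by simp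
  have M: "real (nat \<lceil>real n powr a\<rceil>) \<le> 2 * real n"
    using pa r by linarith
  have "Rk 1 1 a n \<le> real (n * n * nat \<lceil>real n powr a\<rceil>)"
    unfolding Rk_def nat_ceil_powr1 using rank_naive by (simp only: of_nat_le_iff)
  also have "\<dots> = real n * real n * real (nat \<lceil>real n powr a\<rceil>)" by simp
  also have "\<dots> \<le> real n * real n * (2 * real n)"
    using M r by (intro mult_left_mono) auto
  also have "\<dots> = 2 * real n powr 3"
    using r by (simp add: powr_realpow power3_eq_cube)
  finally show "Rk 1 1 a n \<le> 2 * real n powr 3" .
qed

lemma ceil_bound: assumes "y \<ge> 1" shows "real (nat \<lceil>y\<rceil>) powr \<tau> \<le> max 1 (2 powr \<tau>) * y powr \<tau>"
proof -
  have lo: "real (nat \<lceil>y\<rceil>) \<ge> y" using assms by linarith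
  have hi: "real (nat \<lceil>y\<rceil>) \<le> 2 * y" using assms by linarith
  have yp: "y powr \<tau> > 0" using assms by simp
  show ?thesis
  proof (cases "\<tau> \<ge> 0")
    case True
    have "real (nat \<lceil>y\<rceil>) powr \<tau> \<le> (2 * y) powr \<tau>"
      using True hi assms by (intro powr_mono2) auto
    also have "\<dots> = 2 powr \<tau> * y powr \<tau>" using assms by (simp add: powr_mult)
    also have "\<dots> \<le> max 1 (2 powr \<tau>) * y powr \<tau>" using yp by (intro mult_right_mono) auto
    finally show ?thesis .
  next
    case False
    have "real (nat \<lceil>y\<rceil>) powr \<tau> \<le> y powr \<tau>"
      using False lo assms by (intro powr_mono2') auto
    also have "\<dots> \<le> max 1 (2 powr \<tau>) * y powr \<tau>" using mult_right_mono[of 1 "max 1 (2 powr \<tau>)" "y powr \<tau>"] yp by simp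
    finally show ?thesis .
  qed
qed

lemma uniform_bound:
  assumes "\<forall>\<^sub>F n in sequentially. (f n :: real) \<le> C * real n powr \<tau>" and "\<And>n. f n \<ge> 0"
  shows "\<exists>D\<ge>0. \<forall>n\<ge>1. f n \<le> D * real n powr \<tau>"
proof -
  obtain N where N: "\<And>n. n \<ge> N \<Longrightarrow> f n \<le> C * real n powr \<tau>"
    using assms(1) unfolding eventually_sequentially by blast
  define D where "D = max C 0 + (\<Sum>m<N. f m / real m powr \<tau>)"
  have Dnn: "(\<Sum>m<N. f m / real m powr \<tau>) \<ge> 0" using assms(2) by (intro sum_nonneg) auto
  show ?thesis
  proof (intro exI[of _ D] conjI allI impI)
    show "D \<ge> 0" unfolding D_def using Dnn by linarith
    fix n :: nat assume n: "n \<ge> 1"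
    have np: "real n powr \<tau> > 0" using n by simp
    show "f n \<le> D * real n powr \<tau>"
    proof (cases "n \<ge> N")
      case True
      have "f n \<le> C * real n powr \<tau>" using N True by blast
      also have "\<dots> \<le> D * real n powr \<tau>" unfolding D_def using Dnn np by (intro mult_right_mono) auto
      finally show ?thesis .
    next
      case False
      have "f n / real n powr \<tau> \<le> (\<Sum>m<N. f m / real m powr \<tau>)"
        using False assms(2) by (intro member_le_sum) auto
      then have "f n / real n powr \<tau> \<le> D" unfolding D_def by linarith
      then show ?thesis using np by (simp add: divide_le_eq)
    qed
  qed
qed


lemma main_incl:
  fixes \<epsilon> a \<tau> :: real
  assumes e: "\<epsilon> > 0" and a0: "a \<ge> 0" and ae: "a + \<epsilon> \<le> 1" and tS: "\<tau> \<in> Sset 1 1 a"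
  shows "\<tau> \<in> Sset 1 (1 - \<epsilon>) (a + \<epsilon>)"
proof -
  define M where "M = (\<lambda>N::nat. nat \<lceil>real N powr a\<rceil>)"
  define f where "f = (\<lambda>N. real (mm_rank N N (M N)))"
  obtain C where "\<forall>\<^sub>F n in sequentially. Rk 1 1 a n \<le> C * real n powr \<tau>"
    using tS unfolding Sset_def by blast
  then have "\<forall>\<^sub>F n in sequentially. f n \<le> C * real n powr \<tau>"
    unfolding Rk_def f_def M_def nat_ceil_powr1 .
  then obtain D where D0: "D \<ge> 0" and D: "\<And>n. n \<ge> 1 \<Longrightarrow> f n \<le> D * real n powr \<tau>"
    using uniform_bound[of f C \<tau>] unfolding f_def by auto
  have a1: "a < 1" using e ae by linarith
  define l where "l = (1 - \<epsilon> - a) / (1 - a)"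
  have l0: "l \<ge> 0" unfolding l_def using a1 ae by auto
  have l1: "l \<le> 1" unfolding l_def using a1 e by (auto simp: divide_le_eq)
  have h: "l * (1 - a) = 1 - \<epsilon> - a" unfolding l_def using a1 by simp
  have "l + (1 - l) * a = l * (1 - a) + a" "l * a + (1 - l) = 1 - l * (1 - a)" by (simp_all add: algebra_simps)
  then have ex1: "l + (1 - l) * a = 1 - \<epsilon>" and ex2: "l * a + (1 - l) = a + \<epsilon>" using h by linarith+
  define K where "K = max 1 (2 powr \<tau>)"
  have K0: "K > 0" unfolding K_def by auto
  show ?thesis unfolding Sset_def
  proof (intro CollectI exI[of _ "D * D * K * K"], rule eventually_sequentiallyI[of 1])
    fix n :: nat assume n: "n \<ge> 1"
    have r: "real n \<ge> 1" using n by simp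
    define y1 where "y1 = real n powr l"
    define y2 where "y2 = real n powr (1 - l)"
    have y1: "y1 \<ge> 1" unfolding y1_def using r l0 by (simp add: ge_one_powr_ge_zero)
    have y2: "y2 \<ge> 1" unfolding y2_def using r l1 by (simp add: ge_one_powr_ge_zero)
    define N1 where "N1 = nat \<lceil>y1\<rceil>"
    define N2 where "N2 = nat \<lceil>y2\<rceil>"
    have N1y: "real N1 \<ge> y1" unfolding N1_def by linarith
    have N2y: "real N2 \<ge> y2" unfolding N2_def by linarith
    have N1p: "N1 \<ge> 1" "N2 \<ge> 1" using y1 y2 unfolding N1_def N2_def by linarith+
    have M1: "real (M N1) \<ge> real N1 powr a" unfolding M_def by linarith
    have M2: "real (M N2) \<ge> real N2 powr a" unfolding M_def by linarith
    have y12: "y1 * y2 = real n" unfolding y1_def y2_def using r by (simp add: powr_add[symmetric])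
    have d1: "n \<le> N1 * N2"
    proof -
      have "real n \<le> real N1 * real N2" using y12 N1y N2y y1 y2
        by (metis mult_mono order_trans zero_le_one)
      then show ?thesis by (simp only: of_nat_mult[symmetric] of_nat_le_iff)
    qed
    have d2: "nat \<lceil>real n powr (1 - \<epsilon>)\<rceil> \<le> N1 * M N2"
    proof -
      have "real n powr (1 - \<epsilon>) = y1 * y2 powr a"
        unfolding y1_def y2_def ex1[symmetric] using r by (simp add: powr_add powr_powr)
      also have "\<dots> \<le> real N1 * real N2 powr a"
        using N1y N2y y1 y2 a0 by (intro mult_mono powr_mono2) auto
      also have "\<dots> \<le> real N1 * real (M N2)" using M2 by (intro mult_left_mono) auto
      finally have "real n powr (1 - \<epsilon>) \<le> real (N1 * M N2)" by simp
      then show ?thesis by linarith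
    qed
    have d3: "nat \<lceil>real n powr (a + \<epsilon>)\<rceil> \<le> M N1 * N2"
    proof -
      have "real n powr (a + \<epsilon>) = y1 powr a * y2"
        unfolding y1_def y2_def ex2[symmetric] using r by (simp add: powr_add powr_powr mult.commute)
      also have "\<dots> \<le> real N1 powr a * real N2"
        using N1y N2y y1 y2 a0 by (intro mult_mono powr_mono2) auto
      also have "\<dots> \<le> real (M N1) * real N2" using M1 by (intro mult_right_mono) auto
      finally have "real n powr (a + \<epsilon>) \<le> real (M N1 * N2)" by simp
      then show ?thesis by linarith
    qed
    have "mm_rank n (nat \<lceil>real n powr (1 - \<epsilon>)\<rceil>) (nat \<lceil>real n powr (a + \<epsilon>)\<rceil>)
        \<le> mm_rank (N1 * N2) (N1 * M N2) (M N1 * N2)"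
      by (rule rank_mono[OF d1 d2 d3])
    also have "\<dots> \<le> mm_rank N1 N1 (M N1) * mm_rank N2 (M N2) N2" by (rule rank_mult)
    also have "\<dots> \<le> mm_rank N1 N1 (M N1) * mm_rank N2 N2 (M N2)"
      by (intro mult_left_mono rank_cyc) auto
    finally have "Rk 1 (1 - \<epsilon>) (a + \<epsilon>) n \<le> f N1 * f N2"
      unfolding Rk_def f_def nat_ceil_powr1 by (simp only: of_nat_mult[symmetric] of_nat_le_iff)
    also have "\<dots> \<le> (D * real N1 powr \<tau>) * (D * real N2 powr \<tau>)"
      using D N1p D0 by (intro mult_mono) (auto simp: f_def)
    also have "\<dots> \<le> (D * (K * y1 powr \<tau>)) * (D * (K * y2 powr \<tau>))"
      using ceil_bound[OF y1, of \<tau>] ceil_bound[OF y2, of \<tau>] D0 K0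
      unfolding N1_def N2_def K_def by (intro mult_mono mult_left_mono) auto
    also have "\<dots> = D * D * K * K * (y1 powr \<tau> * y2 powr \<tau>)" by (simp add: mult_ac)
    also have "y1 powr \<tau> * y2 powr \<tau> = real n powr \<tau>"
      using y1 y2 y12 by (simp add: powr_mult[symmetric])
    finally show "Rk 1 (1 - \<epsilon>) (a + \<epsilon>) n \<le> D * D * K * K * real n powr \<tau>" .
  qed
qed

theorem theorem9:
  fixes \<epsilon> a r :: real
  assumes "\<epsilon> > 0" and "a \<ge> 0" and "a + \<epsilon> \<le> 1"
    and "omega 1 1 a = r"
  shows "omega 1 (1 - \<epsilon>) (a + \<epsilon>) \<le> r"
proof -
  have "a \<le> 1" using assms by linarith
  then have ne: "Sset 1 1 a \<noteq> {}" using Sset_ne by blast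
  have "Inf (Sset 1 (1 - \<epsilon>) (a + \<epsilon>)) \<le> Inf (Sset 1 1 a)"
    using main_incl[OF assms(1-3)] by (intro cInf_superset_mono[OF ne bdd_Sset]) auto
  then show ?thesis using assms(4) by (simp add: omega_Sset)
qed

end
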